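(* Let $S\subset\mathcal P$ be a rectangular lattice and let $\Delta$ be a bounded region of $\mathcal L_S$ which does not contain the origin $O$ of $\mathbb{R}^2$, with $n$ sides and sign sequence $D_k$, $k\in\mathbb{Z}/n\mathbb{Z}$, as in the context. Then there is no $k$ with $D_k=D_{k+1}=D_{k+2}$.
   Context: $\mathcal P=\mathbb{R}^2\setminus\{(0,0)\}$; for $P=(A,B)\in\mathcal P$, $L_P$ is the line $Ax+By=1$ in $\mathbb{R}^2$; $\mathcal L_S=\{L_P\mid P\in S\}$. A rectangular lattice is a set of the form $S=\{(a+k\delta_x,\,b+j\delta_y)\mid k,j\in\mathbb{Z},\ 0\le k\le N,\ 0\le j\le M\}\setminus\{(0,0)\}$, where $(a,b)\ne(0,0)$, $\delta_x,\delta_y>0$, $N,M\in\mathbb{Z}_{\ge0}$, and the corners $(a,b+M\delta_y)$, $(a+N\delta_x,b)$, $(a+N\delta_x,b+M\delta_y)$ are all different from $(0,0)$. Regions of $\mathcal L_S$ are closures of connected components of $\mathbb{R}^2\setminus\bigcup_{P\in S}L_P$. For a bounded region $\Delta$ with $n$ sides, $L_k$ ($k\in\mathbb{Z}/n\mathbb{Z}$) are the lines containing the sides of $\Delta$ in clockwise order around $\Delta$, and $D_k\in\{l,r\}$ is the side (left or right) of $L_k$ on which $O$ lies for a traveller moving along the side of $\Delta$ on $L_k$ clockwise around $\Delta$ (with $\Delta$ on the traveller's right). *)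

theory Defs
  imports "HOL-Analysis.Analysis"
begin

definition line_of :: "real \<times> real \<Rightarrow> (real \<times> real) set" where
  "line_of P = {q. fst P * fst q + snd P * snd q = 1}"

definition rect_lattice :: "(real \<times> real) set \<Rightarrow> bool" where
  "rect_lattice S \<longleftrightarrow> (\<exists>a b dx dy (N::nat) (M::nat).
      (a, b) \<noteq> (0, 0) \<and> dx > 0 \<and> dy > 0 \<and>
      (a, b + real M * dy) \<noteq> (0, 0) \<and>
      (a + real N * dx, b) \<noteq> (0, 0) \<and>
      (a + real N * dx, b + real M * dy) \<noteq> (0, 0) \<and>
      S = {(a + real k * dx, b + real j * dy) | k j. k \<le> N \<and> j \<le> M} - {(0, 0)})"

definition region_of :: "(real \<times> real) set \<Rightarrow> (real \<times> real) set \<Rightarrow> bool" where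
  "region_of S \<Delta> \<longleftrightarrow> (\<exists>z. z \<notin> (\<Union>P\<in>S. line_of P) \<and>
      \<Delta> = closure (connected_component_set (- (\<Union>P\<in>S. line_of P)) z))"

text \<open>cross u w > 0 iff w points to the left of u (counterclockwise).\<close>
definition cross2 :: "real \<times> real \<Rightarrow> real \<times> real \<Rightarrow> real" where
  "cross2 u w = fst u * snd w - snd u * fst w"

text \<open>Side k of \<Delta> is then the segment [v k, v (k+1)], traversed clockwise with \<Delta> on the right.\<close>
definition clockwise_vertices :: "(real \<times> real) set \<Rightarrow> nat \<Rightarrow> (nat \<Rightarrow> real \<times> real) \<Rightarrow> bool" where
  "clockwise_vertices \<Delta> n v \<longleftrightarrow> n \<ge> 3 \<and>
      \<Delta> = convex hull (v ` {..<n}) \<and>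
      (\<forall>k<n. \<forall>j<n. j \<noteq> k \<and> j \<noteq> (k + 1) mod n \<longrightarrow>
          cross2 (v ((k + 1) mod n) - v k) (v j - v k) < 0)"

datatype lr = l | r

text \<open>D_k: the side (left/right) of L_k on which O lies, for a traveller moving along
  side k from v k to v (k+1) (i.e. clockwise around \<Delta>).\<close>
definition side_D :: "nat \<Rightarrow> (nat \<Rightarrow> real \<times> real) \<Rightarrow> nat \<Rightarrow> lr" where
  "side_D n v k = (let a = v (k mod n); b = v ((k + 1) mod n) in
      if cross2 (b - a) ((0, 0) - a) > 0 then l else r)"

end

theory Submission
  imports Defs
begin
definition P3 :: "int \<Rightarrow> int \<Rightarrow> int \<Rightarrow> bool" where
  "P3 S T D \<longleftrightarrow> \<not>(S*D > 0 \<and> T*D > 0) \<and> \<not>(S*D < 0 \<and> T*D < 0) \<and>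
     \<not>(T = 0 \<and> S*D > 0) \<and> \<not>(S = 0 \<and> T*D < 0)"

definition allowed :: "int \<Rightarrow> int \<Rightarrow> int \<Rightarrow> int \<Rightarrow> int \<Rightarrow> int \<Rightarrow> bool" where
  "allowed a b c e i j \<longleftrightarrow> P3 (i*e - j*c) (a*j - b*i) (a*e - b*c)"

lemma sq_pos_iff[simp]: "0 < (x::int)*x \<longleftrightarrow> x \<noteq> 0"
  by (cases "x > 0") (auto intro: mult_pos_pos mult_neg_neg)

lemma P3_neg: "P3 (-S) (-T) (-D) = P3 S T D"
  unfolding P3_def by simp

lemma allowed_flip1: "allowed (-a) b (-c) e (-i) j = allowed a b c e i j"
proof -
  have "(-i)*e - j*(-c) = -(i*e - j*c)" "(-a)*e - b*(-c) = -(a*e-b*c)" "(-a)*j - b*(-i) = -(a*j-b*i)"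
    by (simp_all add: algebra_simps)
  then show ?thesis unfolding allowed_def by (simp only: P3_neg)
qed

lemma allowed_flip2: "allowed a (-b) c (-e) i (-j) = allowed a b c e i j"
proof -
  have "i*(-e) - (-j)*c = -(i*e - j*c)" "a*(-e) - (-b)*c = -(a*e-b*c)" "a*(-j) - (-b)*i = -(a*j-b*i)"
    by (simp_all add: algebra_simps)
  then show ?thesis unfolding allowed_def by (simp only: P3_neg)
qed

lemma comb_pos:
  fixes a b c e la ha lb hb :: int
  assumes pos: "a > 0" "b > 0" "c > 0" "e > 0" and D: "a*e - b*c \<noteq> 0"
    and box: "la \<le> -a" "c \<le> ha" "lb \<le> -b" "e \<le> hb"
    and H: "\<And>i j. la \<le> i \<Longrightarrow> i \<le> ha \<Longrightarrow> lb \<le> j \<Longrightarrow> j \<le> hb \<Longrightarrow> allowed a b c e i j"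
  shows False
proof -
  have DD: "(a*e - b*c)*(a*e-b*c) > 0" using D
    by (cases "a*e-b*c > 0") (auto intro: mult_pos_pos mult_neg_neg)
  consider "a \<le> c \<and> b \<le> e" | "c \<le> a \<and> e \<le> b" | "a \<le> c \<and> e < b" | "c < a \<and> b \<le> e" by linarith
  then show False
  proof cases
    case 1
    have "allowed a b c e a b" using H 1 box pos by simp
    moreover have "a*b - b*a = 0" by simp
    ultimately show False using DD unfolding allowed_def P3_def by simp
  next
    case 2
    have "allowed a b c e (-c) (-e)" using H 2 box pos by simp
    moreover have "(-c)*e - (-e)*c = 0" by simp
    moreover have "(a*(-e) - b*(-c))*(a*e-b*c) = - ((a*e - b*c)*(a*e-b*c))" by (simp add: algebra_simps)
    ultimately show False using DD unfolding allowed_def P3_def by simp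
  next
    case 3
    have A1: "allowed a b c e a e" using H 3 box pos by simp
    have A2: "allowed a b c e (-a) (-e)" using H 3 box pos by simp
    have S: "a*e - e*c = e*(a-c)" "(-a)*e - (-e)*c = - (e*(a-c))" by (simp_all add: algebra_simps)
    have T: "a*e - b*a = a*(e-b)" "a*(-e) - b*(-a) = -(a*(e-b))" by (simp_all add: algebra_simps)
    have s1: "e*(a-c) \<le> 0" using 3 pos by (simp add: mult_nonneg_nonpos)
    have "a*e \<le> c*e" using 3 pos by simp
    moreover have "c*e < c*b" using 3 pos by simp
    ultimately have d: "a*e - b*c < 0" by (simp add: mult.commute)
    have t1: "a*(e-b) < 0" using 3 pos by (simp add: mult_pos_neg)
    have st: "e*(a-c)*(a*e-b*c) \<ge> 0" using s1 d by (simp add: mult_nonpos_nonpos)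
    have tt: "a*(e-b)*(a*e-b*c) > 0" using t1 d by (simp add: mult_neg_neg)
    show False
    proof (cases "e*(a-c) = 0")
      case True
      then show ?thesis using A2 S T tt unfolding allowed_def P3_def by simp
    next
      case False
      then have "e*(a-c) < 0" using s1 by (simp only: order_less_le) simp
      then have "e*(a-c)*(a*e-b*c) > 0" using d by (simp add: mult_neg_neg)
      then show ?thesis using A1 S T tt unfolding allowed_def P3_def by simp
    qed
  next
    case 4
    have A1: "allowed a b c e c b" using H 4 box pos by simp
    have A2: "allowed a b c e (-c) (-b)" using H 4 box pos by simp
    have S: "c*e - b*c = c*(e-b)" "(-c)*e - (-b)*c = - (c*(e-b))" by (simp_all add: algebra_simps)
    have T: "a*b - b*c = b*(a-c)" "a*(-b) - b*(-c) = -(b*(a-c))" by (simp_all add: algebra_simps)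
    have s1: "c*(e-b) \<ge> 0" using 4 pos by simp
    have "c*b \<le> c*e" using 4 pos by simp
    moreover have "c*e < a*e" using 4 pos by simp
    ultimately have d: "a*e - b*c > 0" by (simp add: mult.commute)
    have t1: "b*(a-c) > 0" using 4 pos by simp
    have st: "c*(e-b)*(a*e-b*c) \<ge> 0" using s1 d by simp
    have tt: "b*(a-c)*(a*e-b*c) > 0" using t1 d by simp
    show False
    proof (cases "c*(e-b) = 0")
      case True
      then show ?thesis using A2 S T tt unfolding allowed_def P3_def by simp
    next
      case False
      then have "c*(e-b) > 0" using s1 by (simp only: order_less_le) simp
      then have "c*(e-b)*(a*e-b*c) > 0" using d by simp
      then show ?thesis using A1 S T tt unfolding allowed_def P3_def by simp
    qed
  qed
qed
lemma P3_iff: "D \<noteq> 0 \<Longrightarrow> P3 S T D \<longleftrightarrow> (S*D \<le> 0 \<and> T*D \<ge> 0) \<or> (S*D > 0 \<and> T*D < 0)"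
  unfolding P3_def by auto

lemma comb_norm:
  fixes a b c e la ha lb hb :: int
  assumes ae: "a \<ge> 0" "e \<ge> 0" and D: "a*e - b*c \<noteq> 0"
    and box: "la \<le> 0" "0 \<le> ha" "lb \<le> 0" "0 \<le> hb" "la \<le> -a" "-a \<le> ha" "la \<le> c" "c \<le> ha"
      "lb \<le> -b" "-b \<le> hb" "lb \<le> e" "e \<le> hb"
    and H: "\<And>i j. la \<le> i \<Longrightarrow> i \<le> ha \<Longrightarrow> lb \<le> j \<Longrightarrow> j \<le> hb \<Longrightarrow> allowed a b c e i j"
    and ij: "la \<le> i" "i \<le> ha" "lb \<le> j" "j \<le> hb"
  shows "(i*e - j*c)*(a*e - b*c) \<le> 0 \<and> (a*j - b*i)*(a*e - b*c) \<ge> 0"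
proof -
  define DD where "DD = a*e - b*c"
  have DDne: "DD \<noteq> 0" using D DD_def by simp
  have sq: "DD*DD > 0" using DDne
    by (cases "DD > 0") (auto intro: mult_pos_pos mult_neg_neg)
  have A: "\<And>i j. la \<le> i \<Longrightarrow> i \<le> ha \<Longrightarrow> lb \<le> j \<Longrightarrow> j \<le> hb \<Longrightarrow>
     ((i*e - j*c)*DD \<le> 0 \<and> (a*j - b*i)*DD \<ge> 0) \<or> ((i*e - j*c)*DD > 0 \<and> (a*j - b*i)*DD < 0)"
    using H P3_iff[OF DDne] unfolding allowed_def DD_def by blast
  define X where "X = a*e*DD"
  define Y where "Y = b*c*DD"
  define Z where "Z = a*b*DD"
  define W where "W = c*e*DD"
  have XY: "X - Y = DD*DD" unfolding X_def Y_def DD_def by (simp add: algebra_simps)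
  have p1: "(-X \<le> 0 \<and> Z \<ge> 0) \<or> (-X > 0 \<and> Z < 0)"
  proof -
    have "(-a*e - 0*c) * DD = -X" "(a*0 - b*(-a))*DD = Z" unfolding X_def Z_def by (simp_all add: algebra_simps)
    then show ?thesis using A[of "-a" 0] box by simp
  qed
  have p2: "(Y \<le> 0 \<and> -Z \<ge> 0) \<or> (Y > 0 \<and> -Z < 0)"
  proof -
    have "(0*e - (-b)*c) * DD = Y" "(a*(-b) - b*0)*DD = -Z" unfolding Y_def Z_def by (simp_all add: algebra_simps)
    then show ?thesis using A[of 0 "-b"] box by simp
  qed
  have p3: "(W \<le> 0 \<and> -Y \<ge> 0) \<or> (W > 0 \<and> -Y < 0)"
  proof -
    have "(c*e - 0*c) * DD = W" "(a*0 - b*c)*DD = -Y" unfolding Y_def W_def by (simp_all add: algebra_simps)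
    then show ?thesis using A[of c 0] box by simp
  qed
  have p4: "(-W \<le> 0 \<and> X \<ge> 0) \<or> (-W > 0 \<and> X < 0)"
  proof -
    have "(0*e - e*c) * DD = -W" "(a*e - b*0)*DD = X" unfolding X_def W_def by (simp_all add: algebra_simps)
    then show ?thesis using A[of 0 e] box by simp
  qed
  have cases: "(Z = 0 \<and> W = 0) \<or> (X > 0 \<and> Z > 0 \<and> W > 0) \<or> (X < 0 \<and> Z < 0 \<and> W < 0)"
    using p1 p2 p3 p4 XY sq by linarith
  have sqpos: "\<And>x::int. x*x \<ge> 0" by simp
  from cases consider "Z = 0 \<and> W = 0" | "(X > 0 \<and> Z > 0 \<and> W > 0) \<or> (X < 0 \<and> Z < 0 \<and> W < 0)" by blast
  then show ?thesis
  proof cases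
    case 2
    have e1: "(a*c)*((e*DD)*(e*DD)) = X*W" unfolding X_def W_def by (simp add: algebra_simps)
    have e2: "(b*e)*((a*DD)*(a*DD)) = X*Z" unfolding X_def Z_def by (simp add: algebra_simps)
    have XW: "X*W > 0" using 2 by (auto intro: mult_pos_pos mult_neg_neg)
    have XZ: "X*Z > 0" using 2 by (auto intro: mult_pos_pos mult_neg_neg)
    have ac: "a*c > 0"
    proof (rule ccontr)
      assume "\<not> a*c > 0"
      then have "(a*c)*((e*DD)*(e*DD)) \<le> 0" using sqpos[of "e*DD"] by (simp add: mult_nonpos_nonneg)
      then show False using e1 XW by simp
    qed
    have be: "b*e > 0"
    proof (rule ccontr)
      assume "\<not> b*e > 0"
      then have "(b*e)*((a*DD)*(a*DD)) \<le> 0" using sqpos[of "a*DD"] by (simp add: mult_nonpos_nonneg)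
      then show False using e2 XZ by simp
    qed
    have "a > 0" "c > 0" using ac ae by (auto simp: zero_less_mult_iff)
    moreover have "e > 0" "b > 0" using be ae by (auto simp: zero_less_mult_iff)
    ultimately have False using comb_pos[of a b c e la ha lb hb] D box H by simp
    then show ?thesis ..
  next
    case 1
    then have ab: "a*b = 0" and ce: "c*e = 0" using DDne unfolding Z_def W_def by auto
    show ?thesis
    proof (cases "b = 0")
      case True
      then have a0: "a > 0" and e0: "e > 0" using D ae by auto
      have c0: "c = 0" using ce e0 by simp
      have DDv: "DD = a*e" using True unfolding DD_def by simp
      have "\<not> (1 \<le> ha)"
      proof
        assume "1 \<le> ha"
        have E1: "(1*e - 0*c)*DD = a*(e*e)" and E2: "(a*0 - b*1)*DD = 0" using True DDv by (simp_all add: algebra_simps)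
        have P: "a*(e*e) > 0" using a0 e0 by simp
        have "((1*e - 0*c)*DD \<le> 0 \<and> (a*0 - b*1)*DD \<ge> 0) \<or> ((1*e - 0*c)*DD > 0 \<and> (a*0 - b*1)*DD < 0)"
          by (rule A) (use box \<open>1 \<le> ha\<close> in linarith)+
        then show False unfolding E1 E2 using P by linarith
      qed
      then have i0: "i \<le> 0" using ij by simp
      have "\<not> (lb \<le> -1)"
      proof
        assume "lb \<le> -1"
        have E1: "(0*e - (-1)*c)*DD = 0" and E2: "(a*(-1) - b*0)*DD = -(a*a*e)" using True DDv c0 by (simp_all add: algebra_simps)
        have P: "a*a*e > 0" using a0 e0 by simp
        have "((0*e - (-1)*c)*DD \<le> 0 \<and> (a*(-1) - b*0)*DD \<ge> 0) \<or> ((0*e - (-1)*c)*DD > 0 \<and> (a*(-1) - b*0)*DD < 0)"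
          by (rule A) (use box \<open>lb \<le> -1\<close> in linarith)+
        then show False unfolding E1 E2 using P by linarith
      qed
      then have j0: "j \<ge> 0" using ij by simp
      have "(i*e - j*c)*(a*e - b*c) = i*(a*e*e)" "(a*j - b*i)*(a*e - b*c) = j*(a*a*e)"
        using True c0 by (simp_all add: algebra_simps)
      moreover have "i*(a*e*e) \<le> 0" using i0 a0 e0 by (simp add: mult_nonpos_nonneg)
      moreover have "j*(a*a*e) \<ge> 0" using j0 a0 e0 by simp
      ultimately show ?thesis by simp
    next
      case False
      then have a0: "a = 0" using ab by simp
      then have c0: "c \<noteq> 0" and e0: "e = 0" using D ce by auto
      have DDv: "DD = -(b*c)" using a0 unfolding DD_def by simp
      have jb: "j*b \<le> 0"
      proof (cases "b > 0")
        case True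
        have "\<not> (1 \<le> hb)"
        proof
          assume "1 \<le> hb"
          have E1: "(0*e - 1*c)*DD = b*(c*c)" and E2: "(a*1 - b*0)*DD = 0" using a0 e0 DDv by (simp_all add: algebra_simps)
          have P: "b*(c*c) > 0" using True c0 by simp
          have "((0*e - 1*c)*DD \<le> 0 \<and> (a*1 - b*0)*DD \<ge> 0) \<or> ((0*e - 1*c)*DD > 0 \<and> (a*1 - b*0)*DD < 0)"
            by (rule A) (use box \<open>1 \<le> hb\<close> in linarith)+
          then show False unfolding E1 E2 using P by linarith
        qed
        then have "j \<le> 0" using ij by linarith
        then show ?thesis using True by (simp add: mult_nonpos_nonneg)
      next
        case False
        then have bn: "b < 0" using \<open>b \<noteq> 0\<close> by simp
        have "\<not> (lb \<le> -1)"
        proof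
          assume "lb \<le> -1"
          have E1: "(0*e - (-1)*c)*DD = -(b*(c*c))" and E2: "(a*(-1) - b*0)*DD = 0" using a0 e0 DDv by (simp_all add: algebra_simps)
          have P: "b*(c*c) < 0" using bn c0 by (simp add: mult_neg_pos)
          have "((0*e - (-1)*c)*DD \<le> 0 \<and> (a*(-1) - b*0)*DD \<ge> 0) \<or> ((0*e - (-1)*c)*DD > 0 \<and> (a*(-1) - b*0)*DD < 0)"
            by (rule A) (use box \<open>lb \<le> -1\<close> in linarith)+
          then show False unfolding E1 E2 using P by linarith
        qed
        then have "j \<ge> 0" using ij by linarith
        then show ?thesis using bn by (simp add: mult_nonneg_nonpos)
      qed
      have ic: "i*c \<ge> 0"
      proof (cases "c > 0")
        case True
        have "\<not> (la \<le> -1)"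
        proof
          assume "la \<le> -1"
          have E1: "((-1)*e - 0*c)*DD = 0" and E2: "(a*0 - b*(-1))*DD = -(b*b*c)" using a0 e0 DDv by (simp_all add: algebra_simps)
          have P: "b*b*c > 0" using True \<open>b \<noteq> 0\<close> by simp
          have "(((-1)*e - 0*c)*DD \<le> 0 \<and> (a*0 - b*(-1))*DD \<ge> 0) \<or> (((-1)*e - 0*c)*DD > 0 \<and> (a*0 - b*(-1))*DD < 0)"
            by (rule A) (use box \<open>la \<le> -1\<close> in linarith)+
          then show False unfolding E1 E2 using P by linarith
        qed
        then have "i \<ge> 0" using ij by linarith
        then show ?thesis using True by simp
      next
        case False
        then have cn: "c < 0" using c0 by simp
        have "\<not> (1 \<le> ha)"
        proof
          assume "1 \<le> ha"
          have E1: "(1*e - 0*c)*DD = 0" and E2: "(a*0 - b*1)*DD = b*b*c" using a0 e0 DDv by (simp_all add: algebra_simps)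
          have P: "b*b*c < 0" using cn \<open>b \<noteq> 0\<close> by (simp add: mult_pos_neg)
          have "((1*e - 0*c)*DD \<le> 0 \<and> (a*0 - b*1)*DD \<ge> 0) \<or> ((1*e - 0*c)*DD > 0 \<and> (a*0 - b*1)*DD < 0)"
            by (rule A) (use box \<open>1 \<le> ha\<close> in linarith)+
          then show False unfolding E1 E2 using P by linarith
        qed
        then have "i \<le> 0" using ij by linarith
        then show ?thesis using cn by (simp add: mult_nonpos_nonpos)
      qed
      have "(i*e - j*c)*(a*e - b*c) = (j*b)*(c*c)" "(a*j - b*i)*(a*e - b*c) = (b*b)*(i*c)"
        using a0 e0 by (simp_all add: algebra_simps)
      then show ?thesis using jb ic by (simp add: mult_nonpos_nonneg)
    qed
  qed
qed

lemma comb_half: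
  fixes a b c e la ha lb hb :: int
  assumes ae: "e \<ge> 0" and D: "a*e - b*c \<noteq> 0"
    and box: "la \<le> 0" "0 \<le> ha" "lb \<le> 0" "0 \<le> hb" "la \<le> -a" "-a \<le> ha" "la \<le> c" "c \<le> ha"
      "lb \<le> -b" "-b \<le> hb" "lb \<le> e" "e \<le> hb"
    and H: "\<And>i j. la \<le> i \<Longrightarrow> i \<le> ha \<Longrightarrow> lb \<le> j \<Longrightarrow> j \<le> hb \<Longrightarrow> allowed a b c e i j"
    and ij: "la \<le> i" "i \<le> ha" "lb \<le> j" "j \<le> hb"
  shows "(i*e - j*c)*(a*e - b*c) \<le> 0 \<and> (a*j - b*i)*(a*e - b*c) \<ge> 0"
proof (cases "a \<ge> 0")
  case True
  then show ?thesis using comb_norm[OF True ae D box H ij] by blast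
next
  case False
  have D': "(-a)*e - b*(-c) \<noteq> 0" using D by (simp add: algebra_simps)
  have H': "allowed (-a) b (-c) e i' j'" if "-ha \<le> i'" "i' \<le> -la" "lb \<le> j'" "j' \<le> hb" for i' j'
  proof -
    have "allowed a b c e (-i') j'" using H that by simp
    then show ?thesis using allowed_flip1[of a b c e "-i'" j'] by simp
  qed
  have "((-i)*e - j*(-c))*((-a)*e - b*(-c)) \<le> 0 \<and> ((-a)*j - b*(-i))*((-a)*e - b*(-c)) \<ge> 0"
    by (rule comb_norm[where a="-a" and b=b and c="-c" and e=e and la="-ha" and ha="-la" and lb=lb and hb=hb and i="-i" and j=j]) (use False ae D' box H' ij in auto)
  moreover have "((-i)*e - j*(-c))*((-a)*e - b*(-c)) = (i*e - j*c)*(a*e - b*c)"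
    "((-a)*j - b*(-i))*((-a)*e - b*(-c)) = (a*j - b*i)*(a*e - b*c)" by (simp_all add: algebra_simps)
  ultimately show ?thesis by simp
qed

lemma comb:
  fixes a b c e la ha lb hb :: int
  assumes D: "a*e - b*c \<noteq> 0"
    and box: "la \<le> 0" "0 \<le> ha" "lb \<le> 0" "0 \<le> hb" "la \<le> -a" "-a \<le> ha" "la \<le> c" "c \<le> ha"
      "lb \<le> -b" "-b \<le> hb" "lb \<le> e" "e \<le> hb"
    and H: "\<And>i j. la \<le> i \<Longrightarrow> i \<le> ha \<Longrightarrow> lb \<le> j \<Longrightarrow> j \<le> hb \<Longrightarrow> allowed a b c e i j"
    and ij: "la \<le> i" "i \<le> ha" "lb \<le> j" "j \<le> hb"
  shows "(i*e - j*c)*(a*e - b*c) \<le> 0 \<and> (a*j - b*i)*(a*e - b*c) \<ge> 0"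
proof (cases "e \<ge> 0")
  case True
  then show ?thesis using comb_half[OF True D box H ij] by blast
next
  case False
  have D': "a*(-e) - (-b)*c \<noteq> 0" using D by (simp add: algebra_simps)
  have H': "allowed a (-b) c (-e) i' j'" if "la \<le> i'" "i' \<le> ha" "-hb \<le> j'" "j' \<le> -lb" for i' j'
  proof -
    have "allowed a b c e i' (-j')" using H that by simp
    then show ?thesis using allowed_flip2[of a b c e i' "-j'"] by simp
  qed
  have "(i*(-e) - (-j)*c)*(a*(-e) - (-b)*c) \<le> 0 \<and> (a*(-j) - (-b)*i)*(a*(-e) - (-b)*c) \<ge> 0"
    by (rule comb_half[where a=a and b="-b" and c=c and e="-e" and la=la and ha=ha and lb="-hb" and hb="-lb" and i=i and j="-j"]) (use False D' box H' ij in auto)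
  moreover have "(i*(-e) - (-j)*c)*(a*(-e) - (-b)*c) = (i*e - j*c)*(a*e - b*c)"
    "(a*(-j) - (-b)*i)*(a*(-e) - (-b)*c) = (a*j - b*i)*(a*e - b*c)" by (simp_all add: algebra_simps)
  ultimately show ?thesis by simp
qed

definition dot :: "real \<times> real \<Rightarrow> real \<times> real \<Rightarrow> real" where
  "dot P x = fst P * fst x + snd P * snd x"

lemma line_of_dot: "q \<in> line_of P \<longleftrightarrow> dot P q = 1"
  unfolding line_of_def dot_def by simp

lemma continuous_dot[continuous_intros]: "continuous_on A (\<lambda>x. dot P x)"
  unfolding dot_def by (intro continuous_intros)

lemma nonsep:
  assumes C: "connected C" and ne: "\<forall>x\<in>C. dot Q x \<noteq> 1"
  shows "(\<forall>x\<in>closure C. dot Q x \<ge> 1) \<or> (\<forall>x\<in>closure C. dot Q x \<le> 1)"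
proof -
  have conn: "connected ((\<lambda>x. dot Q x) ` C)"
    by (rule connected_continuous_image[OF continuous_dot C])
  have "(\<forall>x\<in>C. dot Q x \<ge> 1) \<or> (\<forall>x\<in>C. dot Q x \<le> 1)"
  proof (rule ccontr)
    assume "\<not> ?thesis"
    then obtain x y where x: "x \<in> C" "dot Q x < 1" and y: "y \<in> C" "dot Q y > 1" by force
    have "1 \<in> (\<lambda>x. dot Q x) ` C"
      using conn x y unfolding connected_iff_interval
      by (meson imageI less_imp_le)
    then show False using ne by auto
  qed
  moreover have "closed {x. 1 \<le> dot Q x}"
    by (rule closed_Collect_le) (auto intro: continuous_intros)
  moreover have "closed {x. dot Q x \<le> 1}"
    by (rule closed_Collect_le) (auto intro: continuous_intros)
  ultimately show ?thesis
    using closure_minimal[of C "{x. 1 \<le> dot Q x}"] closure_minimal[of C "{x. dot Q x \<le> 1}"]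
    by blast
qed

definition crs :: "real \<times> real \<Rightarrow> real \<times> real \<Rightarrow> real \<times> real \<Rightarrow> real" where
  "crs a b y = cross2 (b - a) (y - a)"

lemma convex_crs: "convex {y. crs a b y \<le> 0}"
proof -
  have "{y. crs a b y \<le> 0} = {y. inner (- snd (b - a), fst (b - a)) y \<le> inner (- snd (b - a), fst (b - a)) a}"
    unfolding crs_def cross2_def by (auto simp: inner_prod_def algebra_simps)
  then show ?thesis using convex_halfspace_le by simp
qed


lemma seg_in_lines:
  fixes S :: "(real \<times> real) set"
  assumes finS: "finite S"
    and Cdef: "C = connected_component_set (- (\<Union>P\<in>S. line_of P)) z"
    and hD: "\<forall>y\<in>closure C. crs a b y \<le> 0"
    and x: "x \<in> closure C" "crs a b x = 0" and ab: "a \<noteq> b"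
  shows "x \<in> (\<Union>P\<in>S. line_of P)"
proof (rule ccontr)
  define Ls where "Ls = (\<Union>P\<in>S. line_of P)"
  assume "x \<notin> (\<Union>P\<in>S. line_of P)"
  then have xL: "x \<in> - Ls" unfolding Ls_def by simp
  have "closed (line_of P)" for P
  proof -
    have "line_of P = {q. dot P q \<le> 1} \<inter> {q. 1 \<le> dot P q}" by (auto simp: line_of_dot)
    moreover have "closed {q. dot P q \<le> 1}" "closed {q. 1 \<le> dot P q}"
      by (rule closed_Collect_le; auto intro: continuous_intros)+
    ultimately show ?thesis by auto
  qed
  then have "closed Ls" unfolding Ls_def using finS by (intro closed_UN) auto
  then have "open (- Ls)" by auto
  then obtain \<epsilon> where ep: "\<epsilon> > 0" "ball x \<epsilon> \<subseteq> - Ls" using xL open_contains_ball by blast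
  obtain y where y: "y \<in> C" "dist y x < \<epsilon>" using x(1) ep(1) closure_approachable by blast
  have yb: "y \<in> ball x \<epsilon>" using y by (simp add: dist_commute)
  have "ball x \<epsilon> \<subseteq> connected_component_set (- Ls) y"
    by (rule connected_component_maximal[OF yb connected_ball ep(2)])
  also have "\<dots> = C" using y(1) unfolding Cdef Ls_def by (rule connected_component_eq)
  finally have bC: "ball x \<epsilon> \<subseteq> closure C" using closure_subset by blast
  define d where "d = b - a"
  define nv where "nv = (- snd d, fst d)"
  have d0: "d \<noteq> 0" using ab unfolding d_def by simp
  have nv0: "nv \<noteq> 0"
  proof
    assume "nv = 0"
    then have "fst d = 0" "snd d = 0" by (auto simp: nv_def zero_prod_def)
    then show False using d0 by (simp add: prod_eq_iff)
  qed
  have nvpos: "norm nv > 0" using nv0 by simp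
  define t where "t = \<epsilon> / (2 * norm nv)"
  have tpos: "t > 0" unfolding t_def using ep nvpos by simp
  define p where "p = x + t *\<^sub>R nv"
  have "dist p x = t * norm nv" unfolding p_def using tpos by (simp add: dist_norm)
  also have "\<dots> = \<epsilon> / 2" unfolding t_def using nvpos by simp
  finally have "p \<in> ball x \<epsilon>" using ep by (simp add: dist_commute)
  then have "crs a b p \<le> 0" using bC hD by blast
  moreover have "crs a b p = crs a b x + t * ((fst d)^2 + (snd d)^2)"
    unfolding crs_def cross2_def p_def nv_def d_def by (simp add: algebra_simps power2_eq_square)
  moreover have "(fst d)^2 + (snd d)^2 > 0" using d0 by (simp add: sum_power2_gt_zero_iff prod_eq_iff)
  moreover have "t * ((fst d)^2 + (snd d)^2) > 0" using tpos calculation(3) by (rule mult_pos_pos)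
  ultimately show False using x(2) by linarith
qed


lemma dot_comb: "dot P (u *\<^sub>R x + v *\<^sub>R y) = u * dot P x + v * dot P y"
  unfolding dot_def by (simp add: algebra_simps)

lemma side_line:
  fixes S :: "(real \<times> real) set"
  assumes finS: "finite S"
    and Cdef: "C = connected_component_set (- (\<Union>P\<in>S. line_of P)) z"
    and hD: "\<forall>y\<in>closure C. crs a b y \<le> 0"
    and ab: "a \<in> closure C" "b \<in> closure C" "a \<noteq> b" and cv: "convex (closure C)"
  shows "\<exists>P\<in>S. dot P a = 1 \<and> dot P b = 1"
proof -
  define xx where "xx = (\<lambda>t::real. (1 - t) *\<^sub>R a + t *\<^sub>R b)"
  have ex: "\<exists>P. P \<in> S \<and> dot P (xx t) = 1" if t: "t \<in> {0<..<1}" for t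
  proof -
    have "xx t \<in> closure C" unfolding xx_def using t by (intro convexD[OF cv ab(1) ab(2)]) auto
    moreover have "crs a b (xx t) = 0" unfolding xx_def crs_def cross2_def by (simp add: algebra_simps)
    ultimately have "xx t \<in> (\<Union>P\<in>S. line_of P)" using seg_in_lines[OF finS Cdef hD _ _ ab(3)] by blast
    then show ?thesis by (auto simp: line_of_dot)
  qed
  define f where "f = (\<lambda>t. SOME P. P \<in> S \<and> dot P (xx t) = 1)"
  have f: "f t \<in> S \<and> dot (f t) (xx t) = 1" if "t \<in> {0<..<1}" for t
    unfolding f_def using someI_ex[OF ex[OF that]] .
  have "\<not> inj_on f {0<..<(1::real)}"
  proof
    assume "inj_on f {0<..<(1::real)}"
    moreover have "finite (f ` {0<..<(1::real)})" using f finS by (meson finite_subset image_subsetI)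
    ultimately have "finite {0<..<(1::real)}" using finite_imageD by blast
    then show False using infinite_Ioo[of "0::real" 1] by simp
  qed
  then obtain s t where st: "s \<in> {0<..<1}" "t \<in> {0<..<1}" "s \<noteq> t" "f s = f t" unfolding inj_on_def by blast
  define P where "P = f s"
  have PS: "P \<in> S" using f[OF st(1)] P_def by simp
  have e1: "(1 - s) * dot P a + s * dot P b = 1" using f[OF st(1)] P_def unfolding xx_def dot_comb by simp
  have e2: "(1 - t) * dot P a + t * dot P b = 1" using f[OF st(2)] P_def st(4) unfolding xx_def dot_comb by simp
  have "(s - t) * (dot P b - dot P a) = 0" using e1 e2 by (simp add: algebra_simps)
  then have "dot P b = dot P a" using st(3) by simp
  then have "dot P a = 1" "dot P b = 1" using e1 by (simp_all add: algebra_simps)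
  then show ?thesis using PS by blast
qed


lemma lagr: "((fst d)^2 + (snd d)^2) * dot P w = dot P d * (fst d * fst w + snd d * snd w) + cross2 d P * cross2 d w"
  unfolding dot_def cross2_def by (simp add: algebra_simps power2_eq_square)

lemma side_sign:
  assumes P: "dot P a = 1" "dot P b = 1" and ab: "a \<noteq> b"
  shows "\<exists>\<mu>>0. \<forall>y. (if cross2 (b - a) ((0,0) - a) > 0 then 1 else -1 :: real) * (dot P y - 1) = - \<mu> * crs a b y"
proof -
  define d where "d = b - a"
  define nn where "nn = (fst d)^2 + (snd d)^2"
  have d0: "d \<noteq> 0" using ab unfolding d_def by simp
  have nn: "nn > 0" using d0 unfolding nn_def by (simp add: sum_power2_gt_zero_iff prod_eq_iff)
  have Pd: "dot P d = 0" using P unfolding d_def dot_def by (simp add: algebra_simps)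
  define \<kappa> where "\<kappa> = cross2 d P / nn"
  have key: "dot P y - 1 = \<kappa> * crs a b y" for y
  proof -
    have "dot P y - 1 = dot P (y - a)" using P(1) unfolding dot_def by (simp add: algebra_simps)
    also have "\<dots> = cross2 d P * cross2 d (y - a) / nn"
    proof -
      have L: "nn * dot P (y - a) = cross2 d P * cross2 d (y - a)" using lagr[of d P "y - a"] Pd unfolding nn_def by simp
      show ?thesis using L nn by (simp add: eq_divide_eq mult.commute)
    qed
    finally show ?thesis unfolding \<kappa>_def crs_def d_def by simp
  qed
  define c0 where "c0 = cross2 d ((0,0) - a)"
  have c0e: "\<kappa> * c0 = -1" using key[of "(0,0)"] unfolding c0_def crs_def d_def by (simp add: dot_def)
  show ?thesis
  proof (cases "c0 > 0")
    case True
    then have "\<kappa> = -1 / c0" using c0e True by (auto simp: field_simps)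
    then have "\<kappa> < 0" using True by simp
    then show ?thesis using True key unfolding c0_def d_def by (intro exI[of _ "-\<kappa>"]) auto
  next
    case False
    then have "c0 < 0" using c0e by (cases "c0 = 0") auto
    moreover have "\<kappa> = -1 / c0" using c0e \<open>c0 < 0\<close> by (auto simp: field_simps)
    ultimately have "\<kappa> > 0" by (simp add: divide_neg_neg)
    then show ?thesis using False key unfolding c0_def d_def by (intro exI[of _ "\<kappa>"]) auto
  qed
qed


lemma dot_inner: "dot Q x = inner Q x"
  unfolding dot_def by (simp add: inner_prod_def)

lemma all_ge_False:
  fixes S :: "(real \<times> real) set"
  assumes Cdef: "C = connected_component_set (- (\<Union>P\<in>S. line_of P)) z"
    and z: "z \<notin> (\<Union>P\<in>S. line_of P)" and Sne: "S \<noteq> {}"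
    and ge: "\<forall>Q\<in>S. \<forall>x\<in>closure C. dot Q x \<ge> 1" and bd: "bounded (closure C)"
  shows False
proof -
  define Ls where "Ls = (\<Union>P\<in>S. line_of P)"
  define H where "H = (\<Inter>Q\<in>S. {x. inner Q x > 1})"
  have zC: "z \<in> C" using z unfolding Cdef by simp
  have zH: "z \<in> H"
  proof -
    have "z \<in> closure C" using zC closure_subset by blast
    then show ?thesis using ge z unfolding H_def by (force simp: dot_inner line_of_dot)
  qed
  have cH: "convex H" unfolding H_def by (intro convex_INT) (simp add: convex_halfspace_gt)
  have HL: "H \<subseteq> - Ls" unfolding H_def Ls_def by (force simp: line_of_dot dot_def inner_prod_def)
  have "H \<subseteq> connected_component_set (- Ls) z"
    by (rule connected_component_maximal[OF zH convex_connected[OF cH] HL])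
  then have HC: "H \<subseteq> closure C" unfolding Cdef Ls_def using closure_subset by blast
  obtain Q where Q: "Q \<in> S" using Sne by blast
  have "inner Q z > 1" using zH Q unfolding H_def by blast
  then have z0: "z \<noteq> 0" by auto
  obtain B where B: "\<forall>x\<in>closure C. norm x \<le> B" using bd unfolding bounded_iff by blast
  have B0: "B \<ge> norm z" using B zH HC by blast
  define t where "t = B / norm z"
  have t0: "t \<ge> 0" unfolding t_def using B0 norm_ge_zero[of z] by (intro divide_nonneg_nonneg) linarith+
  have "(2 + t) *\<^sub>R z \<in> H"
  proof -
    have "inner Q' ((2 + t) *\<^sub>R z) > 1" if "Q' \<in> S" for Q'
    proof -
      have i1: "inner Q' z > 1" using zH that unfolding H_def by blast
      have "inner Q' ((2 + t) *\<^sub>R z) = (2 + t) * inner Q' z" by simp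
      also have "\<dots> \<ge> 2 * inner Q' z" using t0 i1 by (simp add: mult_right_mono)
      finally show ?thesis using i1 by linarith
    qed
    then show ?thesis unfolding H_def by blast
  qed
  then have "norm ((2 + t) *\<^sub>R z) \<le> B" using B HC by blast
  moreover have "norm ((2 + t) *\<^sub>R z) = (2 + t) * norm z" using t0 by simp
  moreover have "t * norm z = B" unfolding t_def using z0 by simp
  moreover have "norm z > 0" using z0 by simp
  ultimately show False by (simp add: algebra_simps)
qed

lemma all_le_origin:
  fixes S :: "(real \<times> real) set"
  assumes Cdef: "C = connected_component_set (- (\<Union>P\<in>S. line_of P)) z"
    and z: "z \<notin> (\<Union>P\<in>S. line_of P)"
    and le: "\<forall>Q\<in>S. \<forall>x\<in>closure C. dot Q x \<le> 1"
  shows "(0,0) \<in> closure C"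
proof -
  define Ls where "Ls = (\<Union>P\<in>S. line_of P)"
  define H where "H = (\<Inter>Q\<in>S. {x. inner Q x < 1})"
  have zC: "z \<in> C" using z unfolding Cdef by simp
  have zH: "z \<in> H"
  proof -
    have "z \<in> closure C" using zC closure_subset by blast
    then show ?thesis using le z unfolding H_def by (force simp: dot_inner line_of_dot)
  qed
  have cH: "convex H" unfolding H_def by (intro convex_INT) (simp add: convex_halfspace_lt)
  have HL: "H \<subseteq> - Ls" unfolding H_def Ls_def by (force simp: line_of_dot dot_def inner_prod_def)
  have "H \<subseteq> connected_component_set (- Ls) z"
    by (rule connected_component_maximal[OF zH convex_connected[OF cH] HL])
  then have HC: "H \<subseteq> closure C" unfolding Cdef Ls_def using closure_subset by blast
  have "(0,0) \<in> H" unfolding H_def by (simp add: inner_prod_def)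
  then show ?thesis using HC by blast
qed

lemma sgn_transfer:
  fixes D x y :: real
  assumes "D*D > 0" "(D*D) * x = y"
  shows "y > 0 \<Longrightarrow> x > 0" "y < 0 \<Longrightarrow> x < 0"
  using assms by (auto simp: zero_less_mult_iff mult_less_0_iff)

lemma allowed_core:
  fixes S T D F G g hh vu vw vk vt :: real
  assumes D: "D \<noteq> 0" and pos: "F > 0" "G > 0" "g > 0" "hh > 0"
    and eu: "D * vu = T*F" and ew: "D * vw = -(S*G)" and ek: "T = 0 \<longrightarrow> D * vk = g*(D + S)"
    and e3: "S = 0 \<longrightarrow> D * vt = hh*(D - T)"
    and ns: "(vu \<ge> 0 \<and> vw \<ge> 0 \<and> vk \<ge> 0 \<and> vt \<ge> 0) \<or> (vu \<le> 0 \<and> vw \<le> 0 \<and> vk \<le> 0 \<and> vt \<le> 0)"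
  shows "\<not>(S*D > 0 \<and> T*D > 0) \<and> \<not>(S*D < 0 \<and> T*D < 0) \<and> \<not>(T = 0 \<and> S*D > 0) \<and> \<not>(S = 0 \<and> T*D < 0)"
proof -
  have DD: "D*D > 0" using D by (cases "D > 0") (auto intro: mult_pos_pos mult_neg_neg)
  have u: "(D*D) * vu = (T*D)*F"
  proof -
    have "(D*D) * vu = D * (D * vu)" by (simp only: mult.assoc)
    also have "\<dots> = (T*D)*F" unfolding eu by (simp only: mult_ac)
    finally show ?thesis .
  qed
  have w: "(D*D) * vw = -((S*D)*G)"
  proof -
    have "(D*D) * vw = D * (D * vw)" by (simp only: mult.assoc)
    also have "\<dots> = -((S*D)*G)" unfolding ew by (simp only: mult_ac mult_minus_right)
    finally show ?thesis .
  qed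
  show ?thesis
  proof (intro conjI notI)
    assume a: "S*D > 0 \<and> T*D > 0"
    have "(T*D)*F > 0" by (rule mult_pos_pos) (use a pos in auto)
    then have "vu > 0" using sgn_transfer(1)[OF DD u] by simp
    moreover have "(S*D)*G > 0" by (rule mult_pos_pos) (use a pos in auto)
    then have "vw < 0" using sgn_transfer(2)[OF DD w] by simp
    ultimately show False using ns by linarith
  next
    assume a: "S*D < 0 \<and> T*D < 0"
    have "(T*D)*F < 0" by (rule mult_neg_pos) (use a pos in auto)
    then have "vu < 0" using sgn_transfer(2)[OF DD u] by simp
    moreover have "(S*D)*G < 0" by (rule mult_neg_pos) (use a pos in auto)
    then have "vw > 0" using sgn_transfer(1)[OF DD w] by simp
    ultimately show False using ns by linarith
  next
    assume a: "T = 0 \<and> S*D > 0"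
    have "(S*D)*G > 0" by (rule mult_pos_pos) (use a pos in auto)
    then have "vw < 0" using sgn_transfer(2)[OF DD w] by simp
    moreover have k: "(D*D) * vk = g*(D*D + S*D)"
    proof -
      have "(D*D) * vk = D * (D * vk)" by (simp only: mult.assoc)
      also have "\<dots> = D * (g*(D + S))" using ek a by simp
      also have "\<dots> = g*(D*D + S*D)" by (simp add: algebra_simps)
      finally show ?thesis .
    qed
    have "g*(D*D + S*D) > 0" by (rule mult_pos_pos) (use a pos DD in auto)
    then have "vk > 0" using sgn_transfer(1)[OF DD k] by simp
    ultimately show False using ns by linarith
  next
    assume a: "S = 0 \<and> T*D < 0"
    have "(T*D)*F < 0" by (rule mult_neg_pos) (use a pos in auto)
    then have "vu < 0" using sgn_transfer(2)[OF DD u] by simp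
    moreover have k: "(D*D) * vt = hh*(D*D - T*D)"
    proof -
      have "(D*D) * vt = D * (D * vt)" by (simp only: mult.assoc)
      also have "\<dots> = D * (hh*(D - T))" using e3 a by simp
      also have "\<dots> = hh*(D*D - T*D)" by (simp add: algebra_simps)
      finally show ?thesis .
    qed
    have "hh*(D*D - T*D) > 0" by (rule mult_pos_pos) (use a pos DD in auto)
    then have "vt > 0" using sgn_transfer(1)[OF DD k] by simp
    ultimately show False using ns by linarith
  qed
qed

lemma allowed_real:
  fixes S T D F G g hh vu vw vk vt \<sigma> :: real
  assumes sg: "\<sigma> = 1 \<or> \<sigma> = -1" and D: "D \<noteq> 0" and pos: "\<sigma>*F > 0" "\<sigma>*G > 0" "\<sigma>*g > 0" "\<sigma>*hh > 0"
    and eu: "D * vu = T*F" and ew: "D * vw = -(S*G)" and ek: "T = 0 \<longrightarrow> D * vk = g*(D + S)"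
    and e3: "S = 0 \<longrightarrow> D * vt = hh*(D - T)"
    and ns: "(vu \<ge> 0 \<and> vw \<ge> 0 \<and> vk \<ge> 0 \<and> vt \<ge> 0) \<or> (vu \<le> 0 \<and> vw \<le> 0 \<and> vk \<le> 0 \<and> vt \<le> 0)"
  shows "\<not>(S*D > 0 \<and> T*D > 0) \<and> \<not>(S*D < 0 \<and> T*D < 0) \<and> \<not>(T = 0 \<and> S*D > 0) \<and> \<not>(S = 0 \<and> T*D < 0)"
  using sg
proof
  assume "\<sigma> = 1"
  then show ?thesis using allowed_core[OF D _ _ _ _ eu ew ek e3 ns] pos by simp
next
  assume s: "\<sigma> = -1"
  show ?thesis
  proof (rule allowed_core[where F="-F" and G="-G" and g="-g" and hh="-hh" and vu="-vu" and vw="-vw" and vk="-vk" and vt="-vt"])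
    show "D \<noteq> 0" by fact
    show "-F > 0" "-G > 0" "-g > 0" "-hh > 0" using pos s by auto
    show "D * - vu = T * - F" using eu by simp
    show "D * - vw = - (S * - G)" using ew by simp
    show "T = 0 \<longrightarrow> D * - vk = - g * (D + S)" using ek by simp
    show "S = 0 \<longrightarrow> D * - vt = - hh * (D - T)" using e3 by simp
    show "(- vu \<ge> 0 \<and> - vw \<ge> 0 \<and> - vk \<ge> 0 \<and> - vt \<ge> 0) \<or> (- vu \<le> 0 \<and> - vw \<le> 0 \<and> - vk \<le> 0 \<and> - vt \<le> 0)"
      using ns by auto
  qed
qed


lemma concl_real:
  fixes S T D F G vu vw \<sigma> :: real
  assumes sg: "\<sigma> = 1 \<or> \<sigma> = -1" and D: "D \<noteq> 0" and pos: "\<sigma>*F > 0" "\<sigma>*G > 0"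
    and eu: "D * vu = T*F" and ew: "D * vw = -(S*G)" and st: "S*D \<le> 0" "T*D \<ge> 0" and nz: "\<not>(S = 0 \<and> T = 0)"
  shows "\<sigma> * vu > 0 \<or> \<sigma> * vw > 0"
proof -
  have DD: "D*D > 0" using D by (cases "D > 0") (auto intro: mult_pos_pos mult_neg_neg)
  have u: "(D*D) * (\<sigma> * vu) = (T*D)*(\<sigma>*F)"
  proof -
    have "(D*D) * (\<sigma> * vu) = \<sigma> * D * (D * vu)" by (simp only: mult_ac)
    also have "\<dots> = (T*D)*(\<sigma>*F)" unfolding eu by (simp only: mult_ac)
    finally show ?thesis .
  qed
  have w: "(D*D) * (\<sigma> * vw) = -((S*D)*(\<sigma>*G))"
  proof -
    have "(D*D) * (\<sigma> * vw) = \<sigma> * D * (D * vw)" by (simp only: mult_ac)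
    also have "\<dots> = -((S*D)*(\<sigma>*G))" unfolding ew by (simp only: mult_ac mult_minus_right)
    finally show ?thesis .
  qed
  show ?thesis
  proof (cases "T = 0")
    case False
    then have "T*D > 0" using D st by (simp only: order_less_le) simp
    then have "(T*D)*(\<sigma>*F) > 0" using pos(1) by (rule mult_pos_pos)
    then show ?thesis using sgn_transfer(1)[OF DD u] by simp
  next
    case True
    then have "S \<noteq> 0" using nz by simp
    then have "S*D < 0" using D st by (simp only: order_less_le) simp
    then have "(S*D)*(\<sigma>*G) < 0" using pos(2) by (rule mult_neg_pos)
    then show ?thesis using sgn_transfer(1)[OF DD w] by simp
  qed
qed

lemma side_from_one:
  fixes \<sigma> :: real
  assumes sg: "\<sigma> = 1 \<or> \<sigma> = -1" and y: "y \<in> A" and p: "\<sigma> * (f y - 1) > 0"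
    and ns: "(\<forall>x\<in>A. f x \<ge> 1) \<or> (\<forall>x\<in>A. f x \<le> (1::real))"
  shows "\<forall>x\<in>A. \<sigma> * (f x - 1) \<ge> 0"
  using sg
proof
  assume s: "\<sigma> = 1"
  then have "f y > 1" using p by simp
  then have "\<forall>x\<in>A. f x \<ge> 1" using ns y by force
  then show ?thesis using s by simp
next
  assume s: "\<sigma> = -1"
  then have "f y < 1" using p by simp
  then have "\<forall>x\<in>A. f x \<le> 1" using ns y by force
  then show ?thesis using s by simp
qed

lemma modne:
  fixes n k i j :: nat
  assumes "i < j" "j - i < n"
  shows "(k + i) mod n \<noteq> (k + j) mod n"
proof
  assume "(k + i) mod n = (k + j) mod n"
  then have "n dvd (k + j) - (k + i)" using mod_eq_dvd_iff_nat[of "k+i" "k+j" n] assms by simp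
  then have "n dvd j - i" by simp
  then show False using assms by (meson dvd_imp_le zero_less_diff not_le)
qed

theorem lemma4p2:
  fixes S \<Delta> :: "(real \<times> real) set" and n :: nat and v :: "nat \<Rightarrow> real \<times> real"
  assumes "rect_lattice S"
    and "region_of S \<Delta>"
    and "bounded \<Delta>"
    and "(0, 0) \<notin> \<Delta>"
    and "clockwise_vertices \<Delta> n v"
  shows "\<not> (\<exists>k. side_D n v k = side_D n v (k + 1) \<and> side_D n v (k + 1) = side_D n v (k + 2))"
proof
  assume "\<exists>k. side_D n v k = side_D n v (k + 1) \<and> side_D n v (k + 1) = side_D n v (k + 2)"
  then obtain k0 where k0: "side_D n v k0 = side_D n v (k0 + 1)" "side_D n v (k0 + 1) = side_D n v (k0 + 2)" by blast
  from assms(1) obtain a0 b0 dx dy N M where lat: "(a0, b0) \<noteq> (0, 0)" "dx > 0" "dy > 0"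
    "S = {(a0 + real k * dx, b0 + real j * dy) | k j. k \<le> N \<and> j \<le> M} - {(0, 0)}"
    unfolding rect_lattice_def by blast
  define g where "g = (\<lambda>i j::nat. (a0 + real i * dx, b0 + real j * dy))"
  have Sg: "S = {g i j | i j. i \<le> N \<and> j \<le> M} - {(0, 0)}" using lat(4) unfolding g_def by simp
  have "{g i j | i j. i \<le> N \<and> j \<le> M} = (\<lambda>(i,j). g i j) ` ({..N} \<times> {..M})" by auto
  then have finS: "finite S" unfolding Sg by simp
  have Sne: "S \<noteq> {}" using lat(1) unfolding Sg g_def by force
  define Ls where "Ls = (\<Union>P\<in>S. line_of P)"
  from assms(2) obtain z where z: "z \<notin> Ls" "\<Delta> = closure (connected_component_set (- Ls) z)"
    unfolding region_of_def Ls_def by blast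
  define C where "C = connected_component_set (- Ls) z"
  have Cdef: "C = connected_component_set (- (\<Union>P\<in>S. line_of P)) z" unfolding C_def Ls_def ..
  have DC: "\<Delta> = closure C" using z C_def by simp
  from assms(5) have n3: "n \<ge> 3" and Dh: "\<Delta> = convex hull (v ` {..<n})"
    and cw: "\<forall>k<n. \<forall>j<n. j \<noteq> k \<and> j \<noteq> (k + 1) mod n \<longrightarrow>
          cross2 (v ((k + 1) mod n) - v k) (v j - v k) < 0"
    unfolding clockwise_vertices_def by auto
  have npos: "n > 0" using n3 by simp
  define V where "V = (\<lambda>k. v (k mod n))"
  have VD: "V k \<in> \<Delta>" for k unfolding Dh V_def by (rule hull_inc) (simp add: npos)
  have cw': "crs (V k) (V (k+1)) (V j) < 0" if "j mod n \<noteq> k mod n" "j mod n \<noteq> (k+1) mod n" for k j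
  proof -
    have e: "(k mod n + 1) mod n = (k+1) mod n" by (simp add: mod_Suc_eq)
    have "cross2 (v ((k mod n + 1) mod n) - v (k mod n)) (v (j mod n) - v (k mod n)) < 0"
      by (rule cw[rule_format]) (use npos that e in auto)
    then show ?thesis unfolding crs_def V_def e .
  qed
  have half: "\<forall>y\<in>\<Delta>. crs (V k) (V (k+1)) y \<le> 0" for k
  proof -
    have "v ` {..<n} \<subseteq> {y. crs (V k) (V (k+1)) y \<le> 0}"
    proof
      fix y assume "y \<in> v ` {..<n}"
      then obtain j where j: "j < n" "y = v j" by blast
      have yV: "y = V j" using j unfolding V_def by simp
      show "y \<in> {y. crs (V k) (V (k+1)) y \<le> 0}"
      proof (cases "j mod n = k mod n \<or> j mod n = (k+1) mod n")
        case True
        then have "y = V k \<or> y = V (k+1)" using yV unfolding V_def by auto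
        then show ?thesis unfolding crs_def cross2_def by auto
      next
        case False
        then show ?thesis using cw'[of j k] yV by auto
      qed
    qed
    then have "\<Delta> \<subseteq> {y. crs (V k) (V (k+1)) y \<le> 0}" unfolding Dh
      by (rule hull_minimal) (rule convex_crs)
    then show ?thesis by blast
  qed
  have m01: "k mod n \<noteq> (k+1) mod n" for k using modne[of 0 1 n k] n3 by simp
  have m02: "k mod n \<noteq> (k+2) mod n" for k using modne[of 0 2 n k] n3 by simp
  have m12: "(k+1) mod n \<noteq> (k+2) mod n" for k using modne[of 1 2 n k] n3 by simp
  have m13: "(k+1) mod n \<noteq> (k+3) mod n" for k using modne[of 1 3 n k] n3 by simp
  have m23: "(k+2) mod n \<noteq> (k+3) mod n" for k using modne[of 2 3 n k] n3 by simp
  have Vne: "V k \<noteq> V (k+1)" for k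
  proof
    assume "V k = V (k+1)"
    moreover have "crs (V k) (V (k+1)) (V (k+2)) < 0" using cw' m02 m12 by metis
    ultimately show False unfolding crs_def cross2_def by simp
  qed
  have cvx: "convex (closure C)" using Dh DC convex_convex_hull by metis
  have sidex: "\<exists>P\<in>S. dot P (V k) = 1 \<and> dot P (V (k+1)) = 1" for k
    using side_line[OF finS Cdef, of "V k" "V (k+1)"] half[of k] VD Vne DC cvx by simp
  then obtain PP where PP: "\<And>k. PP k \<in> S" "\<And>k. dot (PP k) (V k) = 1" "\<And>k. dot (PP k) (V (k+1)) = 1"
    by metis
  define \<sigma> where "\<sigma> k = (if side_D n v k = l then 1 else -1 :: real)" for k
  have \<sigma>eq: "\<sigma> k = (if cross2 (V (k+1) - V k) ((0,0) - V k) > 0 then 1 else -1)" for k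
    unfolding \<sigma>_def side_D_def Let_def V_def by (auto split: if_splits)
  have sgn: "\<exists>\<mu>>0. \<forall>y. \<sigma> k * (dot (PP k) y - 1) = - \<mu> * crs (V k) (V (k+1)) y" for k
    using side_sign[of "PP k" "V k" "V (k+1)"] PP Vne \<sigma>eq by simp
  have SG1: "\<sigma> k * (dot (PP k) y - 1) \<ge> 0" if "y \<in> \<Delta>" for k y
  proof -
    obtain \<mu> where mu: "\<mu> > 0" "\<forall>y. \<sigma> k * (dot (PP k) y - 1) = - \<mu> * crs (V k) (V (k+1)) y" using sgn by blast
    have "crs (V k) (V (k+1)) y \<le> 0" using half that by blast
    then have "- \<mu> * crs (V k) (V (k+1)) y \<ge> 0" by (intro mult_nonpos_nonpos) (use mu in auto)
    then show ?thesis using mu(2)[rule_format, of y] by linarith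
  qed
  have SG2: "\<sigma> k * (dot (PP k) (V j) - 1) > 0" if "j mod n \<noteq> k mod n" "j mod n \<noteq> (k+1) mod n" for k j
  proof -
    obtain \<mu> where mu: "\<mu> > 0" "\<forall>y. \<sigma> k * (dot (PP k) y - 1) = - \<mu> * crs (V k) (V (k+1)) y" using sgn by blast
    have "crs (V k) (V (k+1)) (V j) < 0" using cw' that by blast
    then have "- \<mu> * crs (V k) (V (k+1)) (V j) > 0" by (intro mult_neg_neg) (use mu in auto)
    then show ?thesis using mu(2)[rule_format, of "V j"] by linarith
  qed
  define \<sigma>0 where "\<sigma>0 = \<sigma> k0"
  have s01: "\<sigma> (k0+1) = \<sigma>0" "\<sigma> (k0+2) = \<sigma>0" unfolding \<sigma>0_def \<sigma>_def using k0 by simp_all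
  have sg: "\<sigma>0 = 1 \<or> \<sigma>0 = -1" unfolding \<sigma>0_def \<sigma>_def by simp
  have NS: "(\<forall>x\<in>\<Delta>. dot (g i j) x \<ge> 1) \<or> (\<forall>x\<in>\<Delta>. dot (g i j) x \<le> 1)" if "i \<le> N" "j \<le> M" for i j
  proof -
    have "\<forall>x\<in>C. dot (g i j) x \<noteq> 1"
    proof (cases "g i j = (0,0)")
      case True
      then show ?thesis by (simp add: dot_def)
    next
      case False
      then have "g i j \<in> S" unfolding Sg using that by blast
      moreover have "C \<subseteq> - Ls" unfolding C_def by (rule connected_component_subset)
      ultimately show ?thesis unfolding Ls_def by (auto simp: line_of_dot)
    qed
    then show ?thesis using nonsep[of C "g i j"] DC unfolding C_def by simp
  qed
  define p0 where "p0 = PP k0"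
  define p1 where "p1 = PP (k0+1)"
  define p2 where "p2 = PP (k0+2)"
  define u where "u = V (k0+1)"
  define w where "w = V (k0+2)"
  define vk where "vk = V k0"
  define vt where "vt = V (k0+3)"
  have d0: "dot p0 vk = 1" "dot p0 u = 1" using PP(2,3)[of k0] unfolding p0_def vk_def u_def by simp_all
  have d1: "dot p1 u = 1" "dot p1 w = 1" using PP(2,3)[of "k0+1"] unfolding p1_def w_def u_def by simp_all
  have d2: "dot p2 w = 1" "dot p2 vt = 1" using PP(2,3)[of "k0+2"] unfolding p2_def w_def vt_def by (simp_all add: eval_nat_numeral)
  have n20: "(k0+2) mod n \<noteq> k0 mod n" using m02[of k0] by metis
  have n21: "(k0+2) mod n \<noteq> (k0+1) mod n" using m12[of k0] by metis
  have n31: "(k0+3) mod n \<noteq> (k0+1) mod n" using m13[of k0] by metis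
  have n32: "(k0+3) mod n \<noteq> (k0+2) mod n" using m23[of k0] by metis
  have s1: "\<sigma>0 * (dot p0 w - 1) > 0" using SG2[OF n20 n21] unfolding \<sigma>0_def p0_def w_def .
  have s2: "\<sigma>0 * (dot p1 vk - 1) > 0" using SG2[of k0 "k0+1"] m01[of k0] m02[of k0] s01
    unfolding p1_def vk_def by simp
  have s3: "\<sigma>0 * (dot p1 vt - 1) > 0" using SG2[of "k0+3" "k0+1"] n31 n32 s01
    unfolding p1_def vt_def by simp
  have s4: "\<sigma>0 * (dot p2 u - 1) > 0" using SG2[of "k0+1" "k0+2"] m12[of k0] m13[of k0] s01
    unfolding p2_def u_def by (simp add: eval_nat_numeral)
  have f6: "\<sigma>0 * (dot p1 y - 1) \<ge> 0" if "y \<in> \<Delta>" for y using SG1[OF that, of "k0+1"] s01 unfolding p1_def by simp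
  obtain i0 j0 where ij0: "i0 \<le> N" "j0 \<le> M" "p0 = g i0 j0" using PP(1)[of k0] unfolding Sg p0_def by blast
  obtain i1 j1 where ij1: "i1 \<le> N" "j1 \<le> M" "p1 = g i1 j1" using PP(1)[of "k0+1"] unfolding Sg p1_def by blast
  obtain i2 j2 where ij2: "i2 \<le> N" "j2 \<le> M" "p2 = g i2 j2" using PP(1)[of "k0+2"] unfolding Sg p2_def by blast
  define a where "a = int i1 - int i0"
  define b where "b = int j1 - int j0"
  define c where "c = int i2 - int i1"
  define e where "e = int j2 - int j1"
  define \<phi> where "\<phi> x i j = real_of_int i * dx * fst x + real_of_int j * dy * snd x" for x and i j :: int
  have shift: "dot (g i' j') x = dot p1 x + \<phi> x (int i' - int i1) (int j' - int j1)" for i' j' x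
    unfolding ij1 g_def dot_def \<phi>_def by (simp add: algebra_simps)
  have dp0: "dot p0 x = dot p1 x - \<phi> x a b" for x
    using shift[of i0 j0 x] unfolding ij0(3) a_def b_def \<phi>_def by (simp add: algebra_simps)
  have dp2: "dot p2 x = dot p1 x + \<phi> x c e" for x
    using shift[of i2 j2 x] unfolding ij2(3) c_def e_def by simp
  have cramer: "real_of_int (a*e - b*c) * \<phi> x i j = real_of_int (i*e - j*c) * \<phi> x a b + real_of_int (a*j - b*i) * \<phi> x c e"
    for x i j unfolding \<phi>_def by (simp add: algebra_simps)
  define F where "F = \<phi> u c e"
  define G where "G = - \<phi> w a b"
  define gk where "gk = \<phi> vk a b"
  define gt where "gt = - \<phi> vt c e"
  have phu: "\<phi> u a b = 0" using dp0[of u] d0 d1 by simp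
  have phw: "\<phi> w c e = 0" using dp2[of w] d1 d2 by simp
  have Fp: "\<sigma>0 * F > 0" using s4 dp2[of u] d1 unfolding F_def by simp
  have Gp: "\<sigma>0 * G > 0" using s1 dp0[of w] d1 unfolding G_def by simp
  have "dot p1 vk - 1 = gk" using dp0[of vk] d0 unfolding gk_def by linarith
  then have gkp: "\<sigma>0 * gk > 0" using s2 by simp
  have "dot p1 vt - 1 = gt" using dp2[of vt] d2 unfolding gt_def by linarith
  then have gtp: "\<sigma>0 * gt > 0" using s3 by simp
  have Dne: "a*e - b*c \<noteq> 0"
  proof
    assume D0: "a*e - b*c = 0"
    then have D0r: "real_of_int a * real_of_int e = real_of_int b * real_of_int c"
      by (metis eq_iff_diff_eq_0 of_int_mult)
    have "real_of_int c * \<phi> u a b = real_of_int a * \<phi> u c e"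
      unfolding \<phi>_def using D0r by (simp add: algebra_simps)
    then have "real_of_int a * F = 0" using phu unfolding F_def by simp
    moreover have "F \<noteq> 0" using Fp by auto
    ultimately have a0: "a = 0" by simp
    have "real_of_int e * \<phi> u a b = real_of_int b * \<phi> u c e"
      unfolding \<phi>_def using D0r by (simp add: algebra_simps)
    then have "real_of_int b * F = 0" using phu unfolding F_def by simp
    then have b0: "b = 0" using \<open>F \<noteq> 0\<close> by simp
    have "G = 0" unfolding G_def \<phi>_def a0 b0 by simp
    then show False using Gp by simp
  qed
  define D where "D = a*e - b*c"
  have box: "- int i1 \<le> 0" "0 \<le> int N - int i1" "- int j1 \<le> 0" "0 \<le> int M - int j1"
    "- int i1 \<le> -a" "-a \<le> int N - int i1" "- int i1 \<le> c" "c \<le> int N - int i1"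
    "- int j1 \<le> -b" "-b \<le> int M - int j1" "- int j1 \<le> e" "e \<le> int M - int j1"
    using ij0 ij1 ij2 unfolding a_def b_def c_def e_def by auto
  have vals: "dot (g (nat (int i1 + i)) (nat (int j1 + j))) x - 1 = (dot p1 x - 1) + \<phi> x i j"
    if "- int i1 \<le> i" "- int j1 \<le> j" for i j x
    using shift[of "nat (int i1 + i)" "nat (int j1 + j)" x] that by simp
  have AL: "allowed a b c e i j" if ij: "- int i1 \<le> i" "i \<le> int N - int i1" "- int j1 \<le> j" "j \<le> int M - int j1" for i j
  proof -
    define Q where "Q = g (nat (int i1 + i)) (nat (int j1 + j))"
    have ns: "(\<forall>x\<in>\<Delta>. dot Q x \<ge> 1) \<or> (\<forall>x\<in>\<Delta>. dot Q x \<le> 1)" unfolding Q_def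
      by (rule NS) (use ij in auto)
    have vs: "dot Q x - 1 = (dot p1 x - 1) + \<phi> x i j" for x unfolding Q_def by (rule vals) (use ij in auto)
    define Sr where "Sr = real_of_int (i*e - j*c)"
    define Tr where "Tr = real_of_int (a*j - b*i)"
    define Dr where "Dr = real_of_int D"
    have cr: "Dr * \<phi> x i j = Sr * \<phi> x a b + Tr * \<phi> x c e" for x
      unfolding Sr_def Tr_def Dr_def D_def by (rule cramer)
    have "\<not>(Sr*Dr > 0 \<and> Tr*Dr > 0) \<and> \<not>(Sr*Dr < 0 \<and> Tr*Dr < 0) \<and> \<not>(Tr = 0 \<and> Sr*Dr > 0) \<and> \<not>(Sr = 0 \<and> Tr*Dr < 0)"
    proof (rule allowed_real[OF sg _ Fp Gp gkp gtp])
      show "Dr \<noteq> 0" using Dne unfolding Dr_def D_def by (simp only: of_int_eq_0_iff) simp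
      show "Dr * (\<phi> u i j) = Tr * F" using cr[of u] phu unfolding F_def by simp
      show "Dr * (\<phi> w i j) = -(Sr * G)" using cr[of w] phw unfolding G_def by simp
      show "Tr = 0 \<longrightarrow> Dr * (gk + \<phi> vk i j) = gk * (Dr + Sr)"
        using cr[of vk] unfolding gk_def by (simp add: algebra_simps)
      show "Sr = 0 \<longrightarrow> Dr * (gt + \<phi> vt i j) = gt * (Dr - Tr)"
        using cr[of vt] unfolding gt_def by (simp add: algebra_simps)
      have m: "u \<in> \<Delta>" "w \<in> \<Delta>" "vk \<in> \<Delta>" "vt \<in> \<Delta>" unfolding u_def w_def vk_def vt_def by (rule VD)+
      have q1: "dot Q u - 1 = \<phi> u i j" "dot Q w - 1 = \<phi> w i j" using vs[of u] vs[of w] d1 by simp_all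
      have q2: "dot Q vk - 1 = gk + \<phi> vk i j" "dot Q vt - 1 = gt + \<phi> vt i j"
        using vs[of vk] vs[of vt] dp0[of vk] d0 dp2[of vt] d2 unfolding gk_def gt_def by simp_all
      from ns show "(\<phi> u i j \<ge> 0 \<and> \<phi> w i j \<ge> 0 \<and> gk + \<phi> vk i j \<ge> 0 \<and> gt + \<phi> vt i j \<ge> 0) \<or>
          (\<phi> u i j \<le> 0 \<and> \<phi> w i j \<le> 0 \<and> gk + \<phi> vk i j \<le> 0 \<and> gt + \<phi> vt i j \<le> 0)"
      proof
        assume "\<forall>x\<in>\<Delta>. dot Q x \<ge> 1"
        then have "dot Q u \<ge> 1" "dot Q w \<ge> 1" "dot Q vk \<ge> 1" "dot Q vt \<ge> 1" using m by auto
        then show ?thesis using q1 q2 by (intro disjI1) linarith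
      next
        assume "\<forall>x\<in>\<Delta>. dot Q x \<le> 1"
        then have "dot Q u \<le> 1" "dot Q w \<le> 1" "dot Q vk \<le> 1" "dot Q vt \<le> 1" using m by auto
        then show ?thesis using q1 q2 by (intro disjI2) linarith
      qed
    qed
    moreover have r: "\<And>X Y::int. real_of_int X * real_of_int Y > 0 \<longleftrightarrow> X*Y > 0"
      "\<And>X Y::int. real_of_int X * real_of_int Y < 0 \<longleftrightarrow> X*Y < 0" "\<And>X::int. real_of_int X = 0 \<longleftrightarrow> X = 0"
      by (simp_all only: of_int_mult[symmetric] of_int_0_less_iff of_int_less_0_iff of_int_eq_0_iff)
    ultimately show ?thesis unfolding allowed_def P3_def Sr_def Tr_def Dr_def D_def
      by (simp only: r) simp
  qed
  have allQ: "\<forall>x\<in>\<Delta>. \<sigma>0 * (dot Q x - 1) \<ge> 0" if QS: "Q \<in> S" for Q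
  proof -
    obtain i' j' where ij': "i' \<le> N" "j' \<le> M" "Q = g i' j'" using QS unfolding Sg by blast
    define i where "i = int i' - int i1"
    define j where "j = int j' - int j1"
    have ibox: "- int i1 \<le> i" "i \<le> int N - int i1" "- int j1 \<le> j" "j \<le> int M - int j1"
      using ij' unfolding i_def j_def by auto
    have CB: "(i*e - j*c)*(a*e - b*c) \<le> 0 \<and> (a*j - b*i)*(a*e - b*c) \<ge> 0"
      by (rule comb[OF Dne box AL ibox]) 
    have dQ: "dot Q x = dot p1 x + \<phi> x i j" for x unfolding ij'(3) i_def j_def by (rule shift)
    have nsQ: "(\<forall>x\<in>\<Delta>. dot Q x \<ge> 1) \<or> (\<forall>x\<in>\<Delta>. dot Q x \<le> 1)" unfolding ij'(3) using NS ij' by blast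
    show ?thesis
    proof (cases "i = 0 \<and> j = 0")
      case True
      then have "Q = p1" unfolding ij'(3) ij1(3) i_def j_def by simp
      then show ?thesis using f6 by simp
    next
      case False
      have nz: "\<not> (i*e - j*c = 0 \<and> a*j - b*i = 0)"
      proof
        assume z0: "i*e - j*c = 0 \<and> a*j - b*i = 0"
        have "(a*e - b*c)*i = (i*e - j*c)*a + (a*j - b*i)*c" by (simp add: algebra_simps)
        then have "(a*e - b*c)*i = 0" using z0 by simp
        then have "i = 0" using Dne by simp
        have "(a*e - b*c)*j = (i*e - j*c)*b + (a*j - b*i)*e" by (simp add: algebra_simps)
        then have "(a*e - b*c)*j = 0" using z0 by simp
        then have "j = 0" using Dne by simp
        then show False using False \<open>i = 0\<close> by simp
      qed
      define Sr where "Sr = real_of_int (i*e - j*c)"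
      define Tr where "Tr = real_of_int (a*j - b*i)"
      define Dr where "Dr = real_of_int (a*e - b*c)"
      have cr: "Dr * \<phi> x i j = Sr * \<phi> x a b + Tr * \<phi> x c e" for x
        unfolding Sr_def Tr_def Dr_def by (rule cramer)
      have "\<sigma>0 * (\<phi> u i j) > 0 \<or> \<sigma>0 * (\<phi> w i j) > 0"
      proof (rule concl_real[OF sg _ Fp Gp])
        show "Dr \<noteq> 0" using Dne unfolding Dr_def by (simp only: of_int_eq_0_iff) simp
        show "Dr * (\<phi> u i j) = Tr * F" using cr[of u] phu unfolding F_def by simp
        show "Dr * (\<phi> w i j) = -(Sr * G)" using cr[of w] phw unfolding G_def by simp
        show "Sr * Dr \<le> 0" "Tr * Dr \<ge> 0" using CB unfolding Sr_def Tr_def Dr_def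
          by (simp_all only: of_int_mult[symmetric] of_int_0_le_iff of_int_le_0_iff)
        show "\<not> (Sr = 0 \<and> Tr = 0)" using nz unfolding Sr_def Tr_def by (simp only: of_int_eq_0_iff) simp
      qed
      then show ?thesis
      proof
        assume "\<sigma>0 * (\<phi> u i j) > 0"
        then have "\<sigma>0 * (dot Q u - 1) > 0" using dQ[of u] d1 by simp
        then show ?thesis using side_from_one[OF sg VD[of "k0+1"] _ nsQ] unfolding u_def by simp
      next
        assume "\<sigma>0 * (\<phi> w i j) > 0"
        then have "\<sigma>0 * (dot Q w - 1) > 0" using dQ[of w] d1 by simp
        then show ?thesis using side_from_one[OF sg VD[of "k0+2"] _ nsQ] unfolding w_def by simp
      qed
    qed
  qed
  have zL: "z \<notin> (\<Union>P\<in>S. line_of P)" using z(1) unfolding Ls_def .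
  show False using sg
  proof
    assume "\<sigma>0 = 1"
    then have "\<forall>Q\<in>S. \<forall>x\<in>closure C. dot Q x \<ge> 1" using allQ DC by simp
    then show False using all_ge_False[OF Cdef zL Sne] assms(3) DC by simp
  next
    assume "\<sigma>0 = -1"
    then have "\<forall>Q\<in>S. \<forall>x\<in>closure C. dot Q x \<le> 1" using allQ DC by simp
    then have "(0,0) \<in> closure C" using all_le_origin[OF Cdef zL] by simp
    then show False using assms(4) DC by simp
  qed
qed

end
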